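(* Let $T$ be the regular rooted tree of valence $p\geq 2$ with the embedded wire diffeology $\mathcal{D}_T$, and equip $\operatorname{Aut}T$ with the functional diffeology. Then every plot $P:\mathbb{R}\to\operatorname{Aut}T$ of this diffeology is a constant map.
   Context: Fix a finite alphabet $A$ with $|A|=p\geq 2$. The vertices of $T$ are the finite words over $A$ (the root is the empty word); two vertices are joined by an edge iff they have the form $a_1\dots a_n$ and $a_1\dots a_na_{n+1}$. As a topological space, $T$ is the 1-dimensional CW complex obtained by realizing each edge as a copy of $[0,1]$, with its usual topology. $\operatorname{Aut}T$ is the group of bijections of the vertex set fixing the root and preserving adjacency; each is regarded as a homeomorphism of the geometric realization mapping each edge affinely onto its image edge. A diffeology on a set $X$ is a collection of maps $U\to X$ ("plots"), $U$ ranging over open subsets of all $\mathbb{R}^n$, containing all constant maps, closed under precomposition with smooth maps, and satisfying the sheaf condition. The embedded wire diffeology $\mathcal{D}_T$ is the diffeology on $T$ generated by (i.e. the smallest diffeology containing) all maps $\gamma:\mathbb{R}\to T$ that are injective, continuous, and homeomorphisms onto their images. A map between diffeological spaces is smooth if it sends plots to plots. The functional diffeology on $C^\infty(T,T)$ is the coarsest diffeology such that the evaluation map $C^\infty(T,T)\times T\to T$ is smooth (with the product diffeology, the coarsest making projections smooth); $\operatorname{Aut}T\subseteq C^\infty(T,T)$ carries the subset diffeology. Equivalently, $P:U\to\operatorname{Aut}T$ is a plot iff $(u,x)\mapsto P(u)(x)$ is smooth $U\times T\to T$. *)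

theory Defs
  imports "HOL-Analysis.Analysis"
begin

text \<open>R^n is represented as the functions nat => real vanishing at all indices >= n.
  Distances use the sup-norm over the first n coordinates (same topology as Euclidean).\<close>

definition rn :: "nat \<Rightarrow> (nat \<Rightarrow> real) set" where
  "rn n = {x. \<forall>i\<ge>n. x i = 0}"

definition openR :: "nat \<Rightarrow> (nat \<Rightarrow> real) set \<Rightarrow> bool" where
  "openR n U \<longleftrightarrow> U \<subseteq> rn n \<and>
     (\<forall>x\<in>U. \<exists>e>0. \<forall>y\<in>rn n. (\<forall>i<n. \<bar>y i - x i\<bar> < e) \<longrightarrow> y \<in> U)"

definition cont_onR :: "nat \<Rightarrow> (nat \<Rightarrow> real) set \<Rightarrow> ((nat \<Rightarrow> real) \<Rightarrow> real) \<Rightarrow> bool" where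
  "cont_onR n U g \<longleftrightarrow> (\<forall>x\<in>U. \<forall>e>0. \<exists>d>0. \<forall>y\<in>U.
      (\<forall>i<n. \<bar>y i - x i\<bar> < d) \<longrightarrow> \<bar>g y - g x\<bar> < e)"

text \<open>C^infinity real-valued functions on an open U in R^n: all iterated partial derivatives
  exist on U and are continuous on U.  D ks is the iterated partial derivative along the
  coordinate list ks.\<close>

definition smooth_real :: "nat \<Rightarrow> (nat \<Rightarrow> real) set \<Rightarrow> ((nat \<Rightarrow> real) \<Rightarrow> real) \<Rightarrow> bool" where
  "smooth_real n U f \<longleftrightarrow> (\<exists>D :: nat list \<Rightarrow> (nat \<Rightarrow> real) \<Rightarrow> real.
      (\<forall>x\<in>U. D [] x = f x) \<and>
      (\<forall>ks. cont_onR n U (D ks)) \<and>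
      (\<forall>ks. \<forall>i<n. \<forall>x\<in>U.
         ((\<lambda>t. D ks (x(i := x i + t))) has_real_derivative D (i # ks) x) (at 0)))"

definition smooth_map :: "nat \<Rightarrow> (nat \<Rightarrow> real) set \<Rightarrow> nat \<Rightarrow> ((nat \<Rightarrow> real) \<Rightarrow> (nat \<Rightarrow> real)) \<Rightarrow> bool" where
  "smooth_map n V m F \<longleftrightarrow> (\<forall>x\<in>V. F x \<in> rn m) \<and> (\<forall>j<m. smooth_real n V (\<lambda>x. F x j))"

text \<open>A parametrization is a triple (n, U, P) with U an open subset of R^n and P : U -> X
  (values of P outside U are irrelevant).  A diffeology is a set of parametrizations.\<close>

type_synonym 'x param = "nat \<times> (nat \<Rightarrow> real) set \<times> ((nat \<Rightarrow> real) \<Rightarrow> 'x)"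

definition diffeology :: "'x param set \<Rightarrow> bool" where
  "diffeology D \<longleftrightarrow>
     (\<forall>n U P. (n, U, P) \<in> D \<longrightarrow> openR n U) \<and>
     (\<forall>n U P Q. (n, U, P) \<in> D \<and> (\<forall>x\<in>U. P x = Q x) \<longrightarrow> (n, U, Q) \<in> D) \<and>
     (\<forall>n U c. openR n U \<longrightarrow> (n, U, \<lambda>_. c) \<in> D) \<and>
     (\<forall>m U P n V F. (m, U, P) \<in> D \<and> openR n V \<and> smooth_map n V m F \<and> F ` V \<subseteq> U
         \<longrightarrow> (n, V, P \<circ> F) \<in> D) \<and>
     (\<forall>n U P. openR n U \<and>
         (\<forall>x\<in>U. \<exists>V. openR n V \<and> x \<in> V \<and> V \<subseteq> U \<and> (n, V, P) \<in> D)
         \<longrightarrow> (n, U, P) \<in> D)"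

definition generated_diffeology :: "'x param set \<Rightarrow> 'x param set" where
  "generated_diffeology G = \<Inter>{D. diffeology D \<and> G \<subseteq> D}"

definition diff_smooth :: "'x param set \<Rightarrow> 'y param set \<Rightarrow> ('x \<Rightarrow> 'y) \<Rightarrow> bool" where
  "diff_smooth D1 D2 f \<longleftrightarrow> (\<forall>n U P. (n, U, P) \<in> D1 \<longrightarrow> (n, U, f \<circ> P) \<in> D2)"

definition prod_diffeology :: "'x param set \<Rightarrow> 'y param set \<Rightarrow> ('x \<times> 'y) param set" where
  "prod_diffeology D1 D2 = {(n, U, P). (n, U, fst \<circ> P) \<in> D1 \<and> (n, U, snd \<circ> P) \<in> D2}"

definition std_real_diffeology :: "real param set" where
  "std_real_diffeology = {(n, U, f). openR n U \<and> smooth_real n U f}"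

text \<open>The alphabet A is a finite type 'a.  A point of the realization is either the root
  ([], 0) or a pair (w, t) with w a nonempty word and 0 <= t < 1: the point of the edge
  from butlast w to w at distance t from the vertex w.  The vertex w is (w, 0).\<close>

typedef 'a tpt = "{(w :: 'a list, t :: real). (w = [] \<and> t = 0) \<or> (w \<noteq> [] \<and> 0 \<le> t \<and> t < 1)}"
  morphisms rep_tpt Abs_tpt
  by (rule exI[of _ "([], 0)"]) simp

text \<open>Characteristic map of the edge {butlast w, w} (w nonempty), [0,1] -> T, s = 0 at the
  parent vertex and s = 1 at the vertex w.\<close>

definition edge_pt :: "'a list \<Rightarrow> real \<Rightarrow> 'a tpt" where
  "edge_pt w s = (if s \<le> 0 then Abs_tpt (butlast w, 0) else Abs_tpt (w, 1 - s))"

definition tree_top :: "'a tpt topology" where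
  "tree_top = topology (\<lambda>U. \<forall>w. w \<noteq> [] \<longrightarrow>
      openin (top_of_set {0..1::real}) {s \<in> {0..1}. edge_pt w s \<in> U})"

definition embedded_wire :: "(real \<Rightarrow> 'a tpt) \<Rightarrow> bool" where
  "embedded_wire \<gamma> \<longleftrightarrow> inj \<gamma> \<and> continuous_map euclidean tree_top \<gamma> \<and>
     homeomorphic_map euclidean (subtopology tree_top (range \<gamma>)) \<gamma>"

definition wire_diffeology :: "'a tpt param set" where
  "wire_diffeology = generated_diffeology
     {(1, rn 1, \<lambda>x. \<gamma> (x 0)) | \<gamma>. embedded_wire \<gamma>}"

definition tree_adj :: "'a list \<Rightarrow> 'a list \<Rightarrow> bool" where
  "tree_adj u v \<longleftrightarrow> (\<exists>a. v = u @ [a]) \<or> (\<exists>a. u = v @ [a])"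

definition is_tree_aut :: "('a list \<Rightarrow> 'a list) \<Rightarrow> bool" where
  "is_tree_aut \<sigma> \<longleftrightarrow> bij \<sigma> \<and> \<sigma> [] = [] \<and> (\<forall>u v. tree_adj u v \<longleftrightarrow> tree_adj (\<sigma> u) (\<sigma> v))"

text \<open>Geometric realization of a vertex automorphism: each edge mapped affinely.\<close>

definition aut_real :: "('a list \<Rightarrow> 'a list) \<Rightarrow> 'a tpt \<Rightarrow> 'a tpt" where
  "aut_real \<sigma> p = Abs_tpt (\<sigma> (fst (rep_tpt p)), snd (rep_tpt p))"

definition AutT :: "('a tpt \<Rightarrow> 'a tpt) set" where
  "AutT = {aut_real \<sigma> | \<sigma>. is_tree_aut \<sigma>}"

end

theory Submission
  imports Defs
begin

lemma istop_tree:
  "istopology (\<lambda>U. \<forall>w. w \<noteq> [] \<longrightarrow>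
      openin (top_of_set {0..1::real}) {s \<in> {0..1}. edge_pt w s \<in> U})"
  unfolding istopology_def
proof (intro conjI allI impI)
  fix S T :: "'a tpt set" and w :: "'a list"
  assume S: "\<forall>w. w \<noteq> [] \<longrightarrow> openin (top_of_set {0..1::real}) {s \<in> {0..1}. edge_pt w s \<in> S}"
    and T: "\<forall>w. w \<noteq> [] \<longrightarrow> openin (top_of_set {0..1::real}) {s \<in> {0..1}. edge_pt w s \<in> T}"
    and w: "w \<noteq> []"
  have "openin (top_of_set {0..1::real}) ({s \<in> {0..1}. edge_pt w s \<in> S} \<inter> {s \<in> {0..1}. edge_pt w s \<in> T})"
    using S T w by (intro openin_Int) auto
  moreover have "{s \<in> {0..1}. edge_pt w s \<in> S} \<inter> {s \<in> {0..1}. edge_pt w s \<in> T} = {s \<in> {0..1}. edge_pt w s \<in> S \<inter> T}"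
    by auto
  ultimately show "openin (top_of_set {0..1::real}) {s \<in> {0..1}. edge_pt w s \<in> S \<inter> T}" by simp
next
  fix K :: "'a tpt set set" and w :: "'a list"
  assume K: "\<forall>k\<in>K. \<forall>w. w \<noteq> [] \<longrightarrow> openin (top_of_set {0..1::real}) {s \<in> {0..1}. edge_pt w s \<in> k}"
    and w: "w \<noteq> []"
  have "openin (top_of_set {0..1::real}) (\<Union>k\<in>K. {s \<in> {0..1}. edge_pt w s \<in> k})"
    using K w by (intro openin_Union) auto
  moreover have "(\<Union>k\<in>K. {s \<in> {0..1}. edge_pt w s \<in> k}) = {s \<in> {0..1}. edge_pt w s \<in> \<Union>K}"
    by auto
  ultimately show "openin (top_of_set {0..1::real}) {s \<in> {0..1}. edge_pt w s \<in> \<Union>K}" by simp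
qed

lemma openin_tree_top:
  "openin tree_top U \<longleftrightarrow> (\<forall>w. w \<noteq> [] \<longrightarrow>
      openin (top_of_set {0..1::real}) {s \<in> {0..1}. edge_pt w s \<in> U})"
  by (simp only: tree_top_def topology_inverse'[OF istop_tree])

definition star :: "'a list \<Rightarrow> 'a tpt set" where
  "star v = {p. fst (rep_tpt p) = v \<or> (\<exists>a. fst (rep_tpt p) = v @ [a] \<and> snd (rep_tpt p) > 0)}"

lemma rep_vertex: "rep_tpt (Abs_tpt (w, 0)) = (w, 0)"
  by (rule Abs_tpt_inverse) auto

lemma rep_edge: "w \<noteq> [] \<Longrightarrow> 0 < s \<Longrightarrow> s \<le> 1 \<Longrightarrow> rep_tpt (Abs_tpt (w, 1 - s)) = (w, 1 - s)"
  by (rule Abs_tpt_inverse) auto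

lemma star_open: "openin tree_top (star v)"
  unfolding openin_tree_top
proof (intro allI impI)
  fix w :: "'a list" assume w: "w \<noteq> []"
  have eq: "{s \<in> {0..1}. edge_pt w s \<in> star v} =
     {s \<in> {0..1::real}. (s \<le> 0 \<and> butlast w = v) \<or> (s > 0 \<and> (w = v \<or> (\<exists>a. w = v @ [a] \<and> s < 1)))}"
    using w by (auto simp: edge_pt_def star_def rep_vertex rep_edge)
  show "openin (top_of_set {0..1::real}) {s \<in> {0..1}. edge_pt w s \<in> star v}"
    unfolding eq openin_open
  proof (cases "w = v")
    case True
    then have "butlast w \<noteq> v" using w
      by (metis append_butlast_last_id append_self_conv butlast.simps(1) not_Cons_self2)
    then show "\<exists>T. open T \<and> {s \<in> {0..1::real}. (s \<le> 0 \<and> butlast w = v) \<or> (s > 0 \<and> (w = v \<or> (\<exists>a. w = v @ [a] \<and> s < 1)))} = {0..1} \<inter> T"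
      using True by (intro exI[of _ "{0<..}"]) auto
  next
    case False
    show "\<exists>T. open T \<and> {s \<in> {0..1::real}. (s \<le> 0 \<and> butlast w = v) \<or> (s > 0 \<and> (w = v \<or> (\<exists>a. w = v @ [a] \<and> s < 1)))} = {0..1} \<inter> T"
    proof (cases "butlast w = v")
      case True
      then have "w = v @ [last w]" using w by (metis append_butlast_last_id)
      then show ?thesis using True False by (intro exI[of _ "{..<1}"]) auto
    next
      case False2: False
      have "\<not> (\<exists>a. w = v @ [a])" using False2 by auto
      then show ?thesis using False False2 by (intro exI[of _ "{}"]) auto
    qed
  qed
qed

definition contP :: "'a tpt param set" where
  "contP = {(n, U, P). openR n U \<and> (\<forall>x\<in>U. \<forall>W. openin tree_top W \<and> P x \<in> W \<longrightarrow>
      (\<exists>e>0. \<forall>y\<in>U. (\<forall>i<n. \<bar>y i - x i\<bar> < e) \<longrightarrow> P y \<in> W))}"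

lemma finite_min_d:
  fixes x :: "nat \<Rightarrow> real" and m :: nat
  shows "(\<forall>j<m. \<exists>d>0. \<forall>y\<in>V. (\<forall>i<n. \<bar>y i - x i\<bar> < d) \<longrightarrow> Q j y) \<Longrightarrow>
     \<exists>d>0. \<forall>j<m. \<forall>y\<in>V. (\<forall>i<n. \<bar>y i - x i\<bar> < d) \<longrightarrow> Q j y"
proof (induction m)
  case 0
  then show ?case by (intro exI[of _ 1]) auto
next
  case (Suc m)
  then obtain d1 where d1: "d1 > 0" "\<forall>j<m. \<forall>y\<in>V. (\<forall>i<n. \<bar>y i - x i\<bar> < d1) \<longrightarrow> Q j y"
    by auto
  from Suc.prems obtain d2 where d2: "d2 > 0" "\<forall>y\<in>V. (\<forall>i<n. \<bar>y i - x i\<bar> < d2) \<longrightarrow> Q m y"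
    by auto
  show ?case
  proof (intro exI[of _ "min d1 d2"] conjI allI impI ballI)
    show "min d1 d2 > 0" using d1 d2 by simp
  next
    fix j y assume "j < Suc m" "y \<in> V" "\<forall>i<n. \<bar>y i - x i\<bar> < min d1 d2"
    then show "Q j y" using d1 d2 by (cases "j = m") auto
  qed
qed

lemma contP_diffeology: "diffeology contP"
  unfolding diffeology_def
proof (intro conjI allI impI)
  fix n U P assume "(n, U, P) \<in> contP"
  then show "openR n U" by (simp add: contP_def)
next
  fix n U P Q assume "(n, U, P) \<in> contP \<and> (\<forall>x\<in>U. P x = Q x)"
  then have A: "openR n U" "\<forall>x\<in>U. \<forall>W. openin tree_top W \<and> P x \<in> W \<longrightarrow>
      (\<exists>e>0. \<forall>y\<in>U. (\<forall>i<n. \<bar>y i - x i\<bar> < e) \<longrightarrow> P y \<in> W)" "\<forall>x\<in>U. P x = Q x"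
    by (auto simp: contP_def)
  have "\<forall>x\<in>U. \<forall>W. openin tree_top W \<and> Q x \<in> W \<longrightarrow>
      (\<exists>e>0. \<forall>y\<in>U. (\<forall>i<n. \<bar>y i - x i\<bar> < e) \<longrightarrow> Q y \<in> W)"
  proof (intro ballI allI impI)
    fix x W assume x: "x \<in> U" and W: "openin tree_top W \<and> Q x \<in> W"
    then obtain e where "e > 0" "\<forall>y\<in>U. (\<forall>i<n. \<bar>y i - x i\<bar> < e) \<longrightarrow> P y \<in> W"
      using A by (metis (no_types, lifting))
    then show "\<exists>e>0. \<forall>y\<in>U. (\<forall>i<n. \<bar>y i - x i\<bar> < e) \<longrightarrow> Q y \<in> W"
      using A(3) by metis
  qed
  then show "(n, U, Q) \<in> contP" using A(1) by (simp add: contP_def)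
next
  fix n U and c :: "'a tpt" assume "openR n U"
  then show "(n, U, \<lambda>_. c) \<in> contP" unfolding contP_def
    by (simp add: zero_less_one_class.zero_less_one exI[of _ 1])
next
  fix m U P n V F
  assume A: "(m, U, P) \<in> contP \<and> openR n V \<and> smooth_map n V m F \<and> F ` V \<subseteq> U"
  then have PU: "\<forall>x\<in>U. \<forall>W. openin tree_top W \<and> P x \<in> W \<longrightarrow>
      (\<exists>e>0. \<forall>y\<in>U. (\<forall>i<m. \<bar>y i - x i\<bar> < e) \<longrightarrow> P y \<in> W)" by (simp add: contP_def)
  have cj: "\<forall>j<m. \<forall>x\<in>V. \<forall>e>0. \<exists>d>0. \<forall>y\<in>V. (\<forall>i<n. \<bar>y i - x i\<bar> < d) \<longrightarrow> \<bar>F y j - F x j\<bar> < e"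
  proof (intro allI impI ballI)
    fix j x and e :: real assume j: "j < m" and x: "x \<in> V" and e: "e > 0"
    have sm: "smooth_map n V m F" using A by blast
    then have "smooth_real n V (\<lambda>x. F x j)" using j unfolding smooth_map_def by blast
    then obtain D where D0: "\<forall>x\<in>V. D [] x = F x j" "\<forall>ks. cont_onR n V (D ks)"
      unfolding smooth_real_def by (elim exE conjE) simp
    have D: "\<forall>x\<in>V. D [] x = F x j" "cont_onR n V (D [])" using D0 by blast+
    from D(2) x e obtain d where "d > 0" "\<forall>y\<in>V. (\<forall>i<n. \<bar>y i - x i\<bar> < d) \<longrightarrow> \<bar>D [] y - D [] x\<bar> < e"
      unfolding cont_onR_def by blast
    then show "\<exists>d>0. \<forall>y\<in>V. (\<forall>i<n. \<bar>y i - x i\<bar> < d) \<longrightarrow> \<bar>F y j - F x j\<bar> < e"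
      using D(1) x by auto
  qed
  have "\<forall>x\<in>V. \<forall>W. openin tree_top W \<and> (P \<circ> F) x \<in> W \<longrightarrow>
      (\<exists>e>0. \<forall>y\<in>V. (\<forall>i<n. \<bar>y i - x i\<bar> < e) \<longrightarrow> (P \<circ> F) y \<in> W)"
  proof (intro ballI allI impI)
    fix x W assume x: "x \<in> V" and W: "openin tree_top W \<and> (P \<circ> F) x \<in> W"
    have FxU: "F x \<in> U" using A x by blast
    have W': "openin tree_top W" "P (F x) \<in> W" using W by auto
    have "\<exists>e>0. \<forall>y\<in>U. (\<forall>i<m. \<bar>y i - F x i\<bar> < e) \<longrightarrow> P y \<in> W"
      using PU FxU W' by blast
    then obtain e where e: "e > 0" "\<forall>y\<in>U. (\<forall>i<m. \<bar>y i - F x i\<bar> < e) \<longrightarrow> P y \<in> W"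
      by (elim exE conjE)
    have "\<forall>j<m. \<exists>d>0. \<forall>y\<in>V. (\<forall>i<n. \<bar>y i - x i\<bar> < d) \<longrightarrow> \<bar>F y j - F x j\<bar> < e"
      using cj x e by blast
    from finite_min_d[OF this] obtain d where d: "d > 0"
      "\<forall>j<m. \<forall>y\<in>V. (\<forall>i<n. \<bar>y i - x i\<bar> < d) \<longrightarrow> \<bar>F y j - F x j\<bar> < e" by blast
    show "\<exists>e>0. \<forall>y\<in>V. (\<forall>i<n. \<bar>y i - x i\<bar> < e) \<longrightarrow> (P \<circ> F) y \<in> W"
    proof (intro exI[of _ d] conjI ballI impI)
      fix y assume y: "y \<in> V" "\<forall>i<n. \<bar>y i - x i\<bar> < d"
      have FU: "F ` V \<subseteq> U" using A by blast
      then have "F y \<in> U" using y by blast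
      moreover have "\<forall>i<m. \<bar>F y i - F x i\<bar> < e" using d y by blast
      ultimately show "(P \<circ> F) y \<in> W" using e by simp
    qed (use d in auto)
  qed
  then show "(n, V, P \<circ> F) \<in> contP" using A by (simp add: contP_def)
next
  fix n U P
  assume A: "openR n U \<and> (\<forall>x\<in>U. \<exists>V. openR n V \<and> x \<in> V \<and> V \<subseteq> U \<and> (n, V, P) \<in> contP)"
  have "\<forall>x\<in>U. \<forall>W. openin tree_top W \<and> P x \<in> W \<longrightarrow>
      (\<exists>e>0. \<forall>y\<in>U. (\<forall>i<n. \<bar>y i - x i\<bar> < e) \<longrightarrow> P y \<in> W)"
  proof (intro ballI allI impI)
    fix x W assume x: "x \<in> U" and W: "openin tree_top W \<and> P x \<in> W"
    from A x obtain V where V: "openR n V" "x \<in> V" "V \<subseteq> U" "(n, V, P) \<in> contP" by blast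
    have PV: "\<forall>x\<in>V. \<forall>W. openin tree_top W \<and> P x \<in> W \<longrightarrow>
      (\<exists>e>0. \<forall>y\<in>V. (\<forall>i<n. \<bar>y i - x i\<bar> < e) \<longrightarrow> P y \<in> W)"
      using V(4) by (simp add: contP_def)
    have "\<exists>e>0. \<forall>y\<in>V. (\<forall>i<n. \<bar>y i - x i\<bar> < e) \<longrightarrow> P y \<in> W"
      using PV V(2) W by blast
    then obtain e1 where e1: "e1 > 0" "\<forall>y\<in>V. (\<forall>i<n. \<bar>y i - x i\<bar> < e1) \<longrightarrow> P y \<in> W"
      by (elim exE conjE)
    from V(1) V(2) obtain e2 where e2: "e2 > 0" "\<forall>y\<in>rn n. (\<forall>i<n. \<bar>y i - x i\<bar> < e2) \<longrightarrow> y \<in> V"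
      unfolding openR_def by blast
    have Urn: "U \<subseteq> rn n" using A by (simp add: openR_def)
    show "\<exists>e>0. \<forall>y\<in>U. (\<forall>i<n. \<bar>y i - x i\<bar> < e) \<longrightarrow> P y \<in> W"
    proof (intro exI[of _ "min e1 e2"] conjI ballI impI)
      fix y assume y: "y \<in> U" "\<forall>i<n. \<bar>y i - x i\<bar> < min e1 e2"
      then have "y \<in> V" using e2 Urn by auto
      then show "P y \<in> W" using e1 y by auto
    qed (use e1 e2 in auto)
  qed
  then show "(n, U, P) \<in> contP" using A by (simp add: contP_def)
qed

lemma openR_rn1: "openR 1 (rn 1)"
  unfolding openR_def by (auto intro: exI[of _ 1])

lemma wire_sub_contP: "wire_diffeology \<subseteq> (contP :: 'a tpt param set)"
proof -
  have "{(1, rn 1, \<lambda>x. \<gamma> (x 0)) | \<gamma>. embedded_wire (\<gamma> :: real \<Rightarrow> 'a tpt)} \<subseteq> contP"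
  proof
    fix z :: "'a tpt param" assume "z \<in> {(1, rn 1, \<lambda>x. \<gamma> (x 0)) | \<gamma>. embedded_wire (\<gamma> :: real \<Rightarrow> 'a tpt)}"
    then obtain \<gamma> :: "real \<Rightarrow> 'a tpt" where z: "z = (1, rn 1, \<lambda>x. \<gamma> (x 0))" and g: "embedded_wire \<gamma>"
      by blast
    have gc: "continuous_map euclidean tree_top \<gamma>" using g by (simp add: embedded_wire_def)
    have "\<forall>x\<in>rn 1. \<forall>W. openin tree_top W \<and> \<gamma> (x 0) \<in> W \<longrightarrow>
      (\<exists>e>0. \<forall>y\<in>rn 1. (\<forall>i<1. \<bar>y i - x i\<bar> < e) \<longrightarrow> \<gamma> (y 0) \<in> W)"
    proof (intro ballI allI impI)
      fix x :: "nat \<Rightarrow> real" and W assume W: "openin tree_top W \<and> \<gamma> (x 0) \<in> W"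
      have "openin euclidean {u \<in> topspace euclidean. \<gamma> u \<in> W}"
        using gc W by (simp add: continuous_map_def)
      then have "open {u. \<gamma> u \<in> W}" by simp
      then obtain e where "e > 0" "\<forall>u. dist u (x 0) < e \<longrightarrow> \<gamma> u \<in> W"
        using W unfolding open_dist by blast
      then show "\<exists>e>0. \<forall>y\<in>rn 1. (\<forall>i<1. \<bar>y i - x i\<bar> < e) \<longrightarrow> \<gamma> (y 0) \<in> W"
        by (intro exI[of _ e]) (auto simp: dist_real_def)
    qed
    then show "z \<in> contP" using z openR_rn1 by (simp add: contP_def)
  qed
  then show ?thesis
    unfolding wire_diffeology_def generated_diffeology_def using contP_diffeology by blast
qed

lemma const_in_generated:
  fixes c :: 'a and G :: "'a param set"
  assumes "openR n U"
  shows "(n, U, \<lambda>_. c) \<in> generated_diffeology G"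
proof -
  have "\<forall>D. diffeology D \<longrightarrow> (n, U, \<lambda>_. c) \<in> D"
  proof (intro allI impI)
    fix D :: "'a param set" assume "diffeology D"
    then have "\<forall>n U c. openR n U \<longrightarrow> (n, U, \<lambda>_. c) \<in> D"
      unfolding diffeology_def by (elim conjE) assumption
    then show "(n, U, \<lambda>_. c) \<in> D" using assms by blast
  qed
  then show ?thesis unfolding generated_diffeology_def by blast
qed

lemma smooth_coord0: "smooth_real 1 (rn 1) (\<lambda>v. v 0)"
proof -
  define D :: "nat list \<Rightarrow> (nat \<Rightarrow> real) \<Rightarrow> real" where
    "D = (\<lambda>ks. if ks = [] then (\<lambda>v. v 0) else (\<lambda>_. if ks = [0] then 1 else 0))"
  have c: "cont_onR 1 (rn 1) (D ks)" for ks
  proof (cases "ks = []")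
    case True
    show ?thesis unfolding cont_onR_def
    proof (intro ballI allI impI)
      fix x :: "nat \<Rightarrow> real" and e :: real assume "e > 0"
      then show "\<exists>d>0. \<forall>y\<in>rn 1. (\<forall>i<1. \<bar>y i - x i\<bar> < d) \<longrightarrow> \<bar>D ks y - D ks x\<bar> < e"
        using True by (intro exI[of _ e]) (simp add: D_def)
    qed
  next
    case False
    show ?thesis unfolding cont_onR_def
    proof (intro ballI allI impI)
      fix x :: "nat \<Rightarrow> real" and e :: real assume "e > 0"
      then show "\<exists>d>0. \<forall>y\<in>rn 1. (\<forall>i<1. \<bar>y i - x i\<bar> < d) \<longrightarrow> \<bar>D ks y - D ks x\<bar> < e"
        using False by (intro exI[of _ 1]) (simp add: D_def)
    qed
  qed
  have d: "((\<lambda>t. D ks (x(i := x i + t))) has_real_derivative D (i # ks) x) (at 0)"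
    if "i < 1" for ks i x
  proof -
    have i: "i = 0" using that by simp
    show ?thesis
    proof (cases "ks = []")
      case True
      have "(\<lambda>t. D ks (x(i := x i + t))) = (\<lambda>t. x 0 + t)" using True i by (simp add: D_def)
      moreover have "D (i # ks) x = 1" using True i by (simp add: D_def)
      moreover have "((\<lambda>t. x 0 + t) has_real_derivative 1) (at 0)"
        by (rule derivative_eq_intros refl | simp)+
      ultimately show ?thesis by simp
    next
      case False
      have "(\<lambda>t. D ks (x(i := x i + t))) = (\<lambda>t. (if ks = [0] then 1 else 0))" using False by (simp add: D_def)
      moreover have "D (i # ks) x = 0" using False i by (simp add: D_def)
      ultimately show ?thesis by simp
    qed
  qed
  have "\<forall>x\<in>rn 1. D [] x = x 0" by (simp add: D_def)
  then show ?thesis unfolding smooth_real_def using c d by blast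
qed

theorem mainTheorem5:
  fixes P :: "real \<Rightarrow> ('a::finite) tpt \<Rightarrow> 'a tpt"
  assumes "CARD('a) \<ge> 2"
    and "\<forall>u. P u \<in> AutT"
    and "diff_smooth (prod_diffeology std_real_diffeology wire_diffeology) wire_diffeology
           (\<lambda>(u, x). P u x)"
  shows "\<exists>c. \<forall>u. P u = c"
proof -
  have "\<forall>u. \<exists>\<sigma>. is_tree_aut \<sigma> \<and> P u = aut_real \<sigma>" using assms(2) by (auto simp: AutT_def)
  then obtain S where S: "\<And>u. P u = aut_real (S u)" by metis
  have Pv: "P u (Abs_tpt (w, 0)) = Abs_tpt (S u w, 0)" for u w
    by (simp add: S aut_real_def rep_vertex)
  have plot: "(1, rn 1, \<lambda>v. P (v 0) x) \<in> contP" for x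
  proof -
    have "(1, rn 1, \<lambda>v. ((v 0, x) :: real \<times> 'a tpt)) \<in> prod_diffeology std_real_diffeology wire_diffeology"
      unfolding prod_diffeology_def std_real_diffeology_def
      using openR_rn1 smooth_coord0 const_in_generated[OF openR_rn1, of x]
      by (simp add: o_def wire_diffeology_def)
    then have "(1, rn 1, (\<lambda>(u, x). P u x) \<circ> (\<lambda>v. (v 0, x))) \<in> wire_diffeology"
      using assms(3) unfolding diff_smooth_def by blast
    then show ?thesis using wire_sub_contP by (auto simp: o_def)
  qed
  have loc: "\<exists>e>0. \<forall>u'. dist u' u < e \<longrightarrow> S u' w = S u w" for u w
  proof -
    define x where "x = (Abs_tpt (w, 0) :: 'a tpt)"
    define v where "v = (\<lambda>i::nat. if i = 0 then u else 0)"
    have v: "v \<in> rn 1" by (simp add: v_def rn_def)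
    have "P (v 0) x \<in> star (S u w)"
      by (simp add: v_def x_def Pv star_def rep_vertex)
    with plot[of x] v star_open obtain e where e: "e > 0"
      "\<forall>y\<in>rn 1. (\<forall>i<1. \<bar>y i - v i\<bar> < e) \<longrightarrow> P (y 0) x \<in> star (S u w)"
      unfolding contP_def by blast
    show ?thesis
    proof (intro exI[of _ e] conjI allI impI)
      fix u' :: real assume d: "dist u' u < e"
      define y where "y = (\<lambda>i::nat. if i = 0 then u' else 0)"
      have "y \<in> rn 1" by (simp add: y_def rn_def)
      moreover have "\<forall>i<1. \<bar>y i - v i\<bar> < e" using d by (simp add: y_def v_def dist_real_def)
      ultimately have "P (y 0) x \<in> star (S u w)" using e by blast
      then show "S u' w = S u w" by (simp add: y_def x_def Pv star_def rep_vertex)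
    qed (use e in auto)
  qed
  have const: "S u w = S 0 w" for u w
  proof -
    let ?A = "{u. S u w = S 0 w}" and ?B = "{u. S u w \<noteq> S 0 w}"
    have oA: "open ?A" unfolding open_dist
    proof (intro ballI)
      fix u assume u: "u \<in> ?A"
      obtain e where e: "e > 0" "\<forall>u'. dist u' u < e \<longrightarrow> S u' w = S u w" using loc[where u=u and w=w] by (elim exE conjE)
      show "\<exists>e>0. \<forall>y. dist y u < e \<longrightarrow> y \<in> ?A"
        using e u by (intro exI[of _ e]) (metis (mono_tags) mem_Collect_eq)
    qed
    have oB: "open ?B" unfolding open_dist
    proof (intro ballI)
      fix u assume u: "u \<in> ?B"
      obtain e where e: "e > 0" "\<forall>u'. dist u' u < e \<longrightarrow> S u' w = S u w" using loc[where u=u and w=w] by (elim exE conjE)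
      show "\<exists>e>0. \<forall>y. dist y u < e \<longrightarrow> y \<in> ?B"
        using e u by (intro exI[of _ e]) (metis (mono_tags) mem_Collect_eq)
    qed
    have "?A \<inter> UNIV = {} \<or> ?B \<inter> UNIV = {}"
      by (rule connectedD[OF connected_UNIV oA oB]) auto
    moreover have "0 \<in> ?A" by simp
    ultimately show ?thesis by blast
  qed
  have SS: "S u = S 0" for u
    by (rule ext) (rule const)
  have "P u = P 0" for u
    using SS[of u] S[of u] S[of 0] by metis
  then show ?thesis by blast
qed

end
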